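(* Let $G$ be a finite group with $Z(G)=I$, $(C_1,\dots,C_m)$ a class vector of $G$ with $m\ge 6$, and $3\le n\le m-3$. Then $$l^i(C_1,\dots,C_m)\ \ge\ |G|\cdot l^i(C_1,\dots,C_n)\cdot l^i(C_{n+1},\dots,C_m).$$
   Context: $I$ is the trivial group and $\iota$ the identity. A class vector is a tuple of non-trivial conjugacy classes. $\Sigma^i(C_1,\dots,C_k)$ is the set of $G$-conjugacy classes (simultaneous conjugation) of tuples $(\sigma_1,\dots,\sigma_k)$ with $\sigma_j\in C_j$, $\langle\sigma_1,\dots,\sigma_k\rangle=G$, $\sigma_1\cdots\sigma_k=\iota$, and $l^i(C_1,\dots,C_k)=|\Sigma^i(C_1,\dots,C_k)|$. *)

theory Defs
  imports "HOL-Algebra.Algebra"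
begin

definition group_center :: "('a, 'b) monoid_scheme \<Rightarrow> 'a set" where
  "group_center G = {z \<in> carrier G. \<forall>g \<in> carrier G. z \<otimes>\<^bsub>G\<^esub> g = g \<otimes>\<^bsub>G\<^esub> z}"

definition conj_by :: "('a, 'b) monoid_scheme \<Rightarrow> 'a \<Rightarrow> 'a \<Rightarrow> 'a" where
  "conj_by G g x = g \<otimes>\<^bsub>G\<^esub> x \<otimes>\<^bsub>G\<^esub> inv\<^bsub>G\<^esub> g"

definition conj_class :: "('a, 'b) monoid_scheme \<Rightarrow> 'a \<Rightarrow> 'a set" where
  "conj_class G x = {conj_by G g x | g. g \<in> carrier G}"

definition conj_classes :: "('a, 'b) monoid_scheme \<Rightarrow> 'a set set" where
  "conj_classes G = {conj_class G x | x. x \<in> carrier G}"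

definition class_vector :: "('a, 'b) monoid_scheme \<Rightarrow> 'a set list \<Rightarrow> bool" where
  "class_vector G Cs \<longleftrightarrow> (\<forall>C \<in> set Cs. C \<in> conj_classes G \<and> C \<noteq> {\<one>\<^bsub>G\<^esub>})"

definition tuple_prod :: "('a, 'b) monoid_scheme \<Rightarrow> 'a list \<Rightarrow> 'a" where
  "tuple_prod G xs = foldr (\<lambda>x y. x \<otimes>\<^bsub>G\<^esub> y) xs \<one>\<^bsub>G\<^esub>"

definition gen_tuples :: "('a, 'b) monoid_scheme \<Rightarrow> 'a set list \<Rightarrow> 'a list set" where
  "gen_tuples G Cs = {xs. list_all2 (\<lambda>x C. x \<in> C) xs Cs
                        \<and> generate G (set xs) = carrier G
                        \<and> tuple_prod G xs = \<one>\<^bsub>G\<^esub>}"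

definition sim_conj_orbit :: "('a, 'b) monoid_scheme \<Rightarrow> 'a list \<Rightarrow> 'a list set" where
  "sim_conj_orbit G xs = {map (conj_by G g) xs | g. g \<in> carrier G}"

definition Sigma_i :: "('a, 'b) monoid_scheme \<Rightarrow> 'a set list \<Rightarrow> 'a list set set" where
  "Sigma_i G Cs = sim_conj_orbit G ` gen_tuples G Cs"

definition l_i :: "('a, 'b) monoid_scheme \<Rightarrow> 'a set list \<Rightarrow> nat" where
  "l_i G Cs = card (Sigma_i G Cs)"

end

theory Submission
  imports Defs
begin

context group
begin

lemma inv_cancel_l [simp]: "x \<in> carrier G \<Longrightarrow> y \<in> carrier G \<Longrightarrow> inv x \<otimes> (x \<otimes> y) = y"
  by (simp add: m_assoc[symmetric])

lemma inv_cancel_r [simp]: "x \<in> carrier G \<Longrightarrow> y \<in> carrier G \<Longrightarrow> x \<otimes> (inv x \<otimes> y) = y"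
  by (simp add: m_assoc[symmetric])

lemma conj_closed: "g \<in> carrier G \<Longrightarrow> x \<in> carrier G \<Longrightarrow> conj_by G g x \<in> carrier G"
  unfolding conj_by_def by simp

lemma conj_comp: "g \<in> carrier G \<Longrightarrow> h \<in> carrier G \<Longrightarrow> x \<in> carrier G \<Longrightarrow>
   conj_by G g (conj_by G h x) = conj_by G (g \<otimes> h) x"
  unfolding conj_by_def by (simp add: m_assoc inv_mult_group)

lemma conj_one: "x \<in> carrier G \<Longrightarrow> conj_by G \<one> x = x"
  unfolding conj_by_def by simp

lemma conj_hom: "g \<in> carrier G \<Longrightarrow> group_hom G G (conj_by G g)"
  unfolding group_hom_def group_hom_axioms_def
proof (intro conjI)
  assume g: "g \<in> carrier G"
  show "group G" by (rule group_axioms)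
  show "group G" by (rule group_axioms)
  show "conj_by G g \<in> hom G G"
  proof (rule homI)
    fix x assume "x \<in> carrier G" thus "conj_by G g x \<in> carrier G" using g conj_closed by blast
  next
    fix x y assume x: "x \<in> carrier G" and y: "y \<in> carrier G"
    have "g \<otimes> (x \<otimes> y) \<otimes> inv g = g \<otimes> x \<otimes> (inv g \<otimes> g) \<otimes> y \<otimes> inv g"
      using g x y by (simp add: m_assoc)
    also have "\<dots> = (g \<otimes> x \<otimes> inv g) \<otimes> (g \<otimes> y \<otimes> inv g)"
      using g x y by (simp add: m_assoc)
    finally show "conj_by G g (x \<otimes> y) = conj_by G g x \<otimes> conj_by G g y"
      unfolding conj_by_def .
  qed
qed

lemma conj_surj: "g \<in> carrier G \<Longrightarrow> conj_by G g ` carrier G = carrier G"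
proof
  assume g: "g \<in> carrier G"
  show "conj_by G g ` carrier G \<subseteq> carrier G" using g conj_closed by blast
  show "carrier G \<subseteq> conj_by G g ` carrier G"
  proof
    fix x assume x: "x \<in> carrier G"
    have "x = conj_by G g (conj_by G (inv g) x)"
      using g x by (simp add: conj_comp conj_one)
    thus "x \<in> conj_by G g ` carrier G" using g x conj_closed by blast
  qed
qed

lemma conj_class_sub: "C \<in> conj_classes G \<Longrightarrow> C \<subseteq> carrier G"
  unfolding conj_classes_def conj_class_def using conj_closed by blast

lemma conj_class_closed:
  assumes "C \<in> conj_classes G" "x \<in> C" "g \<in> carrier G"
  shows "conj_by G g x \<in> C"
proof -
  obtain y where y: "y \<in> carrier G" "C = conj_class G y"
    using assms(1) unfolding conj_classes_def by blast
  then obtain h where h: "h \<in> carrier G" "x = conj_by G h y"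
    using assms(2) unfolding conj_class_def by blast
  have "conj_by G g x = conj_by G (g \<otimes> h) y" using h y assms(3) by (simp add: conj_comp)
  thus ?thesis using y h assms(3) unfolding conj_class_def by blast
qed

lemma tuple_prod_closed: "set xs \<subseteq> carrier G \<Longrightarrow> tuple_prod G xs \<in> carrier G"
  by (induction xs) (auto simp: tuple_prod_def)

lemma tuple_prod_append: "set xs \<subseteq> carrier G \<Longrightarrow> set ys \<subseteq> carrier G \<Longrightarrow>
   tuple_prod G (xs @ ys) = tuple_prod G xs \<otimes> tuple_prod G ys"
proof (induction xs)
  case Nil thus ?case using tuple_prod_closed[of ys] by (simp add: tuple_prod_def)
next
  case (Cons a xs)
  have "tuple_prod G ((a # xs) @ ys) = a \<otimes> tuple_prod G (xs @ ys)" by (simp add: tuple_prod_def)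
  also have "\<dots> = a \<otimes> (tuple_prod G xs \<otimes> tuple_prod G ys)" using Cons by simp
  also have "\<dots> = tuple_prod G (a # xs) \<otimes> tuple_prod G ys"
    using Cons.prems tuple_prod_closed[of xs] tuple_prod_closed[of ys]
    by (simp add: m_assoc tuple_prod_def)
  finally show ?case .
qed

lemma tuple_prod_map_conj: "g \<in> carrier G \<Longrightarrow> set xs \<subseteq> carrier G \<Longrightarrow>
   tuple_prod G (map (conj_by G g) xs) = conj_by G g (tuple_prod G xs)"
proof (induction xs)
  case Nil thus ?case by (simp add: tuple_prod_def conj_by_def)
next
  case (Cons a xs)
  interpret h: group_hom G G "conj_by G g" using conj_hom Cons.prems by blast
  have "tuple_prod G (map (conj_by G g) (a # xs)) = conj_by G g a \<otimes> tuple_prod G (map (conj_by G g) xs)"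
    by (simp add: tuple_prod_def)
  also have "\<dots> = conj_by G g a \<otimes> conj_by G g (tuple_prod G xs)" using Cons by simp
  also have "\<dots> = conj_by G g (a \<otimes> tuple_prod G xs)"
    using Cons.prems tuple_prod_closed[of xs] by simp
  finally show ?case by (simp add: tuple_prod_def)
qed

lemma gen_tuples_sub: "class_vector G Cs \<Longrightarrow> xs \<in> gen_tuples G Cs \<Longrightarrow> set xs \<subseteq> carrier G"
proof
  fix x assume cv: "class_vector G Cs" and xs: "xs \<in> gen_tuples G Cs" and x: "x \<in> set xs"
  have la: "list_all2 (\<lambda>x C. x \<in> C) xs Cs" using xs unfolding gen_tuples_def by blast
  obtain i where i: "i < length xs" "x = xs ! i" using x by (auto simp: in_set_conv_nth)
  have len: "length xs = length Cs" using la by (rule list_all2_lengthD)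
  have "x \<in> Cs ! i" using la i list_all2_nthD by blast
  moreover have "Cs ! i \<in> conj_classes G" using cv i len unfolding class_vector_def by simp
  ultimately show "x \<in> carrier G" using conj_class_sub by blast
qed

lemma gen_tuples_conj:
  assumes cv: "class_vector G Cs" and xs: "xs \<in> gen_tuples G Cs" and g: "g \<in> carrier G"
  shows "map (conj_by G g) xs \<in> gen_tuples G Cs"
proof -
  have sub: "set xs \<subseteq> carrier G" using gen_tuples_sub cv xs by blast
  interpret h: group_hom G G "conj_by G g" using conj_hom g by blast
  have la: "list_all2 (\<lambda>x C. x \<in> C) xs Cs" and gen: "generate G (set xs) = carrier G"
    and pr: "tuple_prod G xs = \<one>" using xs unfolding gen_tuples_def by auto
  have "list_all2 (\<lambda>x C. x \<in> C) (map (conj_by G g) xs) Cs"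
    using la cv g unfolding class_vector_def
    by (auto simp: list_all2_conv_all_nth intro!: conj_class_closed)
  moreover have "generate G (set (map (conj_by G g) xs)) = carrier G"
    using h.generate_img[OF sub] gen conj_surj[OF g] by simp
  moreover have "tuple_prod G (map (conj_by G g) xs) = \<one>"
    using tuple_prod_map_conj[OF g sub] pr g by (simp add: conj_by_def)
  ultimately show ?thesis unfolding gen_tuples_def by blast
qed

lemma finite_gen_tuples:
  assumes "finite (carrier G)" "class_vector G Cs"
  shows "finite (gen_tuples G Cs)"
proof -
  have "gen_tuples G Cs \<subseteq> {xs. set xs \<subseteq> carrier G \<and> length xs = length Cs}"
    using gen_tuples_sub[OF assms(2)] unfolding gen_tuples_def
    by (auto dest: list_all2_lengthD)
  thus ?thesis using finite_lists_length_eq[OF assms(1)] finite_subset by blast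
qed

lemma commute_generate:
  assumes z: "z \<in> carrier G" and S: "S \<subseteq> carrier G" and c: "\<And>x. x \<in> S \<Longrightarrow> z \<otimes> x = x \<otimes> z"
    and y: "y \<in> generate G S"
  shows "z \<otimes> y = y \<otimes> z"
  using y
proof (induction rule: generate.induct)
  case one thus ?case using z by simp
next
  case (incl h) thus ?case using c by blast
next
  case (inv h)
  have h: "h \<in> carrier G" using inv S by blast
  have "inv h \<otimes> (z \<otimes> h) \<otimes> inv h = inv h \<otimes> (h \<otimes> z) \<otimes> inv h" using inv c by simp
  thus ?case using h z by (simp add: m_assoc)
next
  case (eng h1 h2)
  have c1: "h1 \<in> carrier G" using eng generate_incl[OF S] by blast
  have c2: "h2 \<in> carrier G" using eng generate_incl[OF S] by blast
  have "z \<otimes> (h1 \<otimes> h2) = (z \<otimes> h1) \<otimes> h2" using z c1 c2 by (simp add: m_assoc)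
  also have "\<dots> = h1 \<otimes> (z \<otimes> h2)" using eng z c1 c2 by (simp add: m_assoc)
  also have "\<dots> = (h1 \<otimes> h2) \<otimes> z" using eng z c1 c2 by (simp add: m_assoc)
  finally show ?case .
qed

lemma orbit_card:
  assumes cv: "class_vector G Cs" and xs: "xs \<in> gen_tuples G Cs"
    and ctr: "group_center G = {\<one>}"
  shows "card (sim_conj_orbit G xs) = order G"
proof -
  have sub: "set xs \<subseteq> carrier G" using gen_tuples_sub cv xs by blast
  have gen: "generate G (set xs) = carrier G" using xs unfolding gen_tuples_def by auto
  have eq: "sim_conj_orbit G xs = (\<lambda>g. map (conj_by G g) xs) ` carrier G"
    unfolding sim_conj_orbit_def by blast
  have "inj_on (\<lambda>g. map (conj_by G g) xs) (carrier G)"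
  proof (rule inj_onI)
    fix g h assume g: "g \<in> carrier G" and h: "h \<in> carrier G"
      and e: "map (conj_by G g) xs = map (conj_by G h) xs"
    define z where "z = inv h \<otimes> g"
    have zc: "z \<in> carrier G" using g h z_def by simp
    have cm: "z \<otimes> x = x \<otimes> z" if x: "x \<in> set xs" for x
    proof -
      have xc: "x \<in> carrier G" using x sub by blast
      have "conj_by G g x = conj_by G h x" using e x by (simp add: map_eq_conv)
      hence "g \<otimes> x \<otimes> inv g = h \<otimes> x \<otimes> inv h" unfolding conj_by_def .
      hence "inv h \<otimes> (g \<otimes> x \<otimes> inv g) \<otimes> g = inv h \<otimes> (h \<otimes> x \<otimes> inv h) \<otimes> g" by simp
      thus ?thesis using g h xc unfolding z_def by (simp add: m_assoc)
    qed
    have "z \<in> group_center G"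
      unfolding group_center_def
      using commute_generate[OF zc sub cm] gen zc by auto
    hence "z = \<one>" using ctr by blast
    hence "h \<otimes> (inv h \<otimes> g) = h \<otimes> \<one>" unfolding z_def by simp
    thus "g = h" using g h by (simp add: m_assoc[symmetric])
  qed
  thus ?thesis unfolding eq order_def by (simp add: card_image)
qed

lemma orbit_shift:
  assumes sub: "set xs \<subseteq> carrier G" and g: "g \<in> carrier G"
  shows "sim_conj_orbit G (map (conj_by G g) xs) = sim_conj_orbit G xs"
proof
  show "sim_conj_orbit G (map (conj_by G g) xs) \<subseteq> sim_conj_orbit G xs"
  proof
    fix w assume "w \<in> sim_conj_orbit G (map (conj_by G g) xs)"
    then obtain h where h: "h \<in> carrier G" "w = map (conj_by G h) (map (conj_by G g) xs)"
      unfolding sim_conj_orbit_def by blast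
    hence "w = map (conj_by G (h \<otimes> g)) xs" using sub g by (auto simp: conj_comp)
    thus "w \<in> sim_conj_orbit G xs" using h g unfolding sim_conj_orbit_def by blast
  qed
  show "sim_conj_orbit G xs \<subseteq> sim_conj_orbit G (map (conj_by G g) xs)"
  proof
    fix w assume "w \<in> sim_conj_orbit G xs"
    then obtain h where h: "h \<in> carrier G" "w = map (conj_by G h) xs"
      unfolding sim_conj_orbit_def by blast
    have "map (conj_by G (h \<otimes> inv g)) (map (conj_by G g) xs) = map (conj_by G h) xs"
      using sub g h by (auto simp: conj_comp m_assoc)
    thus "w \<in> sim_conj_orbit G (map (conj_by G g) xs)" using h g unfolding sim_conj_orbit_def
      by (metis (mono_tags, lifting) inv_closed m_closed mem_Collect_eq)
  qed
qed

lemma count_tuples: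
  assumes fin: "finite (carrier G)" and cv: "class_vector G Cs"
    and ctr: "group_center G = {\<one>}"
  shows "card (gen_tuples G Cs) = order G * l_i G Cs"
proof -
  have U: "\<Union> (Sigma_i G Cs) = gen_tuples G Cs"
  proof
    show "\<Union> (Sigma_i G Cs) \<subseteq> gen_tuples G Cs"
      unfolding Sigma_i_def sim_conj_orbit_def using gen_tuples_conj[OF cv] by blast
    show "gen_tuples G Cs \<subseteq> \<Union> (Sigma_i G Cs)"
    proof
      fix xs assume xs: "xs \<in> gen_tuples G Cs"
      have "map (conj_by G \<one>) xs = xs" using gen_tuples_sub[OF cv xs] by (metis map_idI conj_one subsetD)
      hence "xs \<in> sim_conj_orbit G xs" unfolding sim_conj_orbit_def by force
      thus "xs \<in> \<Union> (Sigma_i G Cs)" using xs unfolding Sigma_i_def by blast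
    qed
  qed
  have disj: "pairwise disjnt (Sigma_i G Cs)"
  proof (rule pairwiseI)
    fix O1 O2 assume o1: "O1 \<in> Sigma_i G Cs" and o2: "O2 \<in> Sigma_i G Cs" and ne: "O1 \<noteq> O2"
    obtain xs where xs: "xs \<in> gen_tuples G Cs" "O1 = sim_conj_orbit G xs" using o1 unfolding Sigma_i_def by blast
    obtain ys where ys: "ys \<in> gen_tuples G Cs" "O2 = sim_conj_orbit G ys" using o2 unfolding Sigma_i_def by blast
    show "disjnt O1 O2"
    proof (rule ccontr)
      assume "\<not> disjnt O1 O2"
      then obtain w where "w \<in> O1" "w \<in> O2" unfolding disjnt_def by blast
      then obtain g h where g: "g \<in> carrier G" "w = map (conj_by G g) xs"
        and h: "h \<in> carrier G" "w = map (conj_by G h) ys"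
        using xs ys unfolding sim_conj_orbit_def by blast
      have "sim_conj_orbit G w = O1" using orbit_shift[OF gen_tuples_sub[OF cv xs(1)] g(1)] g xs by simp
      moreover have "sim_conj_orbit G w = O2" using orbit_shift[OF gen_tuples_sub[OF cv ys(1)] h(1)] h ys by simp
      ultimately show False using ne by simp
    qed
  qed
  have fo: "\<And>A. A \<in> Sigma_i G Cs \<Longrightarrow> finite A"
    using U finite_gen_tuples[OF fin cv] by (metis Union_upper finite_subset)
  have "card (gen_tuples G Cs) = sum card (Sigma_i G Cs)"
    using card_Union_disjoint[OF disj fo] U by simp
  also have "\<dots> = sum (\<lambda>_. order G) (Sigma_i G Cs)"
    by (rule sum.cong) (auto simp: Sigma_i_def orbit_card[OF cv _ ctr])
  also have "\<dots> = order G * l_i G Cs" unfolding l_i_def by simp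
  finally show ?thesis .
qed

end

theorem proposition12:
  fixes G :: "('a, 'b) monoid_scheme" and Cs :: "'a set list" and n :: nat
  assumes "group G" and "finite (carrier G)"
    and "group_center G = {\<one>\<^bsub>G\<^esub>}"
    and "class_vector G Cs"
    and "length Cs \<ge> 6"
    and "3 \<le> n" and "n \<le> length Cs - 3"
  shows "l_i G Cs \<ge> order G * l_i G (take n Cs) * l_i G (drop n Cs)"
proof -
  interpret group G by fact
  have cv1: "class_vector G (take n Cs)" using assms(4) unfolding class_vector_def
    by (meson in_set_takeD)
  have cv2: "class_vector G (drop n Cs)" using assms(4) unfolding class_vector_def
    by (meson in_set_dropD)
  let ?A = "gen_tuples G Cs" and ?A1 = "gen_tuples G (take n Cs)" and ?A2 = "gen_tuples G (drop n Cs)"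
  have inj: "inj_on (\<lambda>(xs, ys). xs @ ys) (?A1 \<times> ?A2)"
  proof (rule inj_onI, clarify)
    fix xs ys xs' ys' assume a: "xs \<in> ?A1" "xs' \<in> ?A1" and e: "xs @ ys = xs' @ ys'"
    have "length xs = length xs'" using a unfolding gen_tuples_def by (metis (no_types, lifting) list_all2_lengthD mem_Collect_eq)
    thus "xs = xs' \<and> ys = ys'" using e by simp
  qed
  have img: "(\<lambda>(xs, ys). xs @ ys) ` (?A1 \<times> ?A2) \<subseteq> ?A"
  proof clarify
    fix xs ys assume a1: "xs \<in> ?A1" and a2: "ys \<in> ?A2"
    have s1: "set xs \<subseteq> carrier G" using gen_tuples_sub[OF cv1 a1] .
    have s2: "set ys \<subseteq> carrier G" using gen_tuples_sub[OF cv2 a2] .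
    have la1: "list_all2 (\<lambda>x C. x \<in> C) xs (take n Cs)" and g1: "generate G (set xs) = carrier G"
      and p1: "tuple_prod G xs = \<one>\<^bsub>G\<^esub>" using a1 unfolding gen_tuples_def by auto
    have la2: "list_all2 (\<lambda>x C. x \<in> C) ys (drop n Cs)"
      and p2: "tuple_prod G ys = \<one>\<^bsub>G\<^esub>" using a2 unfolding gen_tuples_def by auto
    have "list_all2 (\<lambda>x C. x \<in> C) (xs @ ys) (take n Cs @ drop n Cs)"
      using la1 la2 by (rule list_all2_appendI)
    hence "list_all2 (\<lambda>x C. x \<in> C) (xs @ ys) Cs" by simp
    moreover have "generate G (set (xs @ ys)) = carrier G"
    proof
      show "generate G (set (xs @ ys)) \<subseteq> carrier G" using s1 s2 generate_incl by simp
      show "carrier G \<subseteq> generate G (set (xs @ ys))" using g1 mono_generate[of "set xs" "set (xs @ ys)"] by simp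
    qed
    moreover have "tuple_prod G (xs @ ys) = \<one>\<^bsub>G\<^esub>" using tuple_prod_append[OF s1 s2] p1 p2 by simp
    ultimately show "xs @ ys \<in> ?A" unfolding gen_tuples_def by blast
  qed
  have "card (?A1 \<times> ?A2) \<le> card ?A"
    using card_inj_on_le[OF inj img finite_gen_tuples[OF assms(2) assms(4)]] .
  hence "order G * l_i G (take n Cs) * (order G * l_i G (drop n Cs)) \<le> order G * l_i G Cs"
    using count_tuples[OF assms(2) _ assms(3)] assms(4) cv1 cv2 by (simp add: card_cartesian_product)
  moreover have "order G > 0" unfolding order_def using assms(2) by (auto simp: card_gt_0_iff)
  ultimately show ?thesis by (simp add: mult.assoc mult.left_commute)
qed

end
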